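(* Let $\mathbf x=(k,S,\Lambda,\mathbf a)$ be an abelian group $k$-parameter and $G=G_{\mathbf x}$. If $U\subseteq{}^\omega S$ and $u\subseteq{}^\omega S\setminus U$ is finite, then $G_{U,u}\subseteq G_{U\cup u}$, and moreover $G_{U,u}$ is a pure subgroup of $G_{U\cup u}$ and $G_{U\cup u}$ is a pure subgroup of $G$.
   Context: For a set $S$, ${}^\omega S$ is the set of all functions $\omega\to S$. An abelian group $k$-parameter is $\mathbf x=(k,S,\Lambda,\mathbf a)$ with $k<\omega$, $S$ a set, $\Lambda\subseteq {}^{k+1}({}^\omega S)$ (sequences $\bar\eta=\langle\eta_0,\dots,\eta_k\rangle$, $\eta_\ell\in{}^\omega S$) and $\mathbf a:\Lambda\times\omega\to\mathbb Z$, $\mathbf a_{\bar\eta,n}=\mathbf a(\bar\eta,n)$. For $\bar\eta\in\Lambda$, $m\le k$, $n<\omega$, $\bar\eta\upharpoonleft\langle m,n\rangle$ is the sequence obtained from $\bar\eta$ by replacing $\eta_m$ with $\eta_m\restriction n$. $\Lambda_m=\{\bar\eta\upharpoonleft\langle m,n\rangle:\bar\eta\in\Lambda,n<\omega\}$, $\Lambda_{\le k}=\bigcup_{m\le k}\Lambda_m$. $G_{\mathbf x}$ is the abelian group generated by $z$, $x_{\bar\nu}$ ($\bar\nu\in\Lambda_{\le k}$), $y_{\bar\eta,n}$ ($\bar\eta\in\Lambda,n<\omega$) freely except for the relations $(n!)y_{\bar\eta,n+1}=y_{\bar\eta,n}+\mathbf a_{\bar\eta,n}z+\sum_{m\le k}x_{\bar\eta\upharpoonleft\langle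 m,n\rangle}$ ($\bar\eta\in\Lambda$, $n<\omega$). For $U\subseteq{}^\omega S$, $G_U$ is the subgroup of $G_{\mathbf x}$ generated by $\{z\}\cup\{y_{\bar\eta,n}:\bar\eta\in\Lambda\cap{}^{k+1}U,n<\omega\}\cup\{x_{\bar\eta\upharpoonleft\langle m,n\rangle}:\bar\eta\in\Lambda\cap{}^{k+1}U,m\le k,n<\omega\}$. For $U\subseteq{}^\omega S$ and finite $u\subseteq{}^\omega S$, $G_{U,u}$ is the subgroup of $G_{\mathbf x}$ generated by $\bigcup_{\eta\in u}G_{U\cup(u\setminus\{\eta\})}$ (so $G_{U,\emptyset}=\{0\}$). A subgroup $H\subseteq K$ is pure if $na\in H$, $a\in K$, $0\neq n\in\mathbb Z$ imply $a\in H$. *)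

theory Defs
  imports "HOL-Algebra.Free_Abelian_Groups" "HOL-Algebra.Coset"
begin

text \<open>A component of an index sequence: either a full omega-sequence or a finite
  initial segment (eta restricted to n), represented as a list of length n.\<close>
datatype 's part = Full "nat \<Rightarrow> 's" | Fin "'s list"

datatype 's gen = GZ | GX "'s part list" | GY "(nat \<Rightarrow> 's) list" nat

definition omega_seqs :: "'s set \<Rightarrow> (nat \<Rightarrow> 's) set" where
  "omega_seqs S = {\<eta>. \<forall>i. \<eta> i \<in> S}"

definition is_param :: "nat \<Rightarrow> 's set \<Rightarrow> (nat \<Rightarrow> 's) list set \<Rightarrow> ((nat \<Rightarrow> 's) list \<Rightarrow> nat \<Rightarrow> int) \<Rightarrow> bool" where
  "is_param k S \<Lambda> a \<longleftrightarrow> (\<forall>\<eta>s\<in>\<Lambda>. length \<eta>s = Suc k \<and> (\<forall>\<eta>\<in>set \<eta>s. \<eta> \<in> omega_seqs S))"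

definition trunc :: "(nat \<Rightarrow> 's) list \<Rightarrow> nat \<Rightarrow> nat \<Rightarrow> 's part list" where
  "trunc \<eta>s m n = (map Full \<eta>s)[m := Fin (map (\<eta>s ! m) [0..<n])]"

definition Lam_le :: "nat \<Rightarrow> (nat \<Rightarrow> 's) list set \<Rightarrow> 's part list set" where
  "Lam_le k \<Lambda> = {trunc \<eta>s m n | \<eta>s m n. \<eta>s \<in> \<Lambda> \<and> m \<le> k}"

definition gens :: "nat \<Rightarrow> (nat \<Rightarrow> 's) list set \<Rightarrow> 's gen set" where
  "gens k \<Lambda> = {GZ} \<union> GX ` Lam_le k \<Lambda> \<union> {GY \<eta>s n | \<eta>s n. \<eta>s \<in> \<Lambda>}"

definition FA :: "nat \<Rightarrow> (nat \<Rightarrow> 's) list set \<Rightarrow> ('s gen \<Rightarrow>\<^sub>0 int) monoid" where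
  "FA k \<Lambda> = free_Abelian_group (gens k \<Lambda>)"

definition relator :: "nat \<Rightarrow> ((nat \<Rightarrow> 's) list \<Rightarrow> nat \<Rightarrow> int) \<Rightarrow> (nat \<Rightarrow> 's) list \<Rightarrow> nat \<Rightarrow> ('s gen \<Rightarrow>\<^sub>0 int)" where
  "relator k a \<eta>s n =
     frag_cmul (int (fact n)) (frag_of (GY \<eta>s (Suc n))) - frag_of (GY \<eta>s n)
     - frag_cmul (a \<eta>s n) (frag_of GZ) - (\<Sum>m\<le>k. frag_of (GX (trunc \<eta>s m n)))"

definition rels :: "nat \<Rightarrow> (nat \<Rightarrow> 's) list set \<Rightarrow> ((nat \<Rightarrow> 's) list \<Rightarrow> nat \<Rightarrow> int) \<Rightarrow> ('s gen \<Rightarrow>\<^sub>0 int) set" where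
  "rels k \<Lambda> a = {relator k a \<eta>s n | \<eta>s n. \<eta>s \<in> \<Lambda>}"

definition relsub :: "nat \<Rightarrow> (nat \<Rightarrow> 's) list set \<Rightarrow> ((nat \<Rightarrow> 's) list \<Rightarrow> nat \<Rightarrow> int) \<Rightarrow> ('s gen \<Rightarrow>\<^sub>0 int) set" where
  "relsub k \<Lambda> a = generate (FA k \<Lambda>) (rels k \<Lambda> a)"

definition Gx :: "nat \<Rightarrow> (nat \<Rightarrow> 's) list set \<Rightarrow> ((nat \<Rightarrow> 's) list \<Rightarrow> nat \<Rightarrow> int) \<Rightarrow> ('s gen \<Rightarrow>\<^sub>0 int) set monoid" where
  "Gx k \<Lambda> a = FA k \<Lambda> Mod relsub k \<Lambda> a"

definition cls :: "nat \<Rightarrow> (nat \<Rightarrow> 's) list set \<Rightarrow> ((nat \<Rightarrow> 's) list \<Rightarrow> nat \<Rightarrow> int) \<Rightarrow> 's gen \<Rightarrow> ('s gen \<Rightarrow>\<^sub>0 int) set" where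
  "cls k \<Lambda> a g = relsub k \<Lambda> a #>\<^bsub>FA k \<Lambda>\<^esub> frag_of g"

definition GU :: "nat \<Rightarrow> (nat \<Rightarrow> 's) list set \<Rightarrow> ((nat \<Rightarrow> 's) list \<Rightarrow> nat \<Rightarrow> int) \<Rightarrow> (nat \<Rightarrow> 's) set \<Rightarrow> ('s gen \<Rightarrow>\<^sub>0 int) set set" where
  "GU k \<Lambda> a U = generate (Gx k \<Lambda> a) (cls k \<Lambda> a `
     ({GZ} \<union> {GY \<eta>s n | \<eta>s n. \<eta>s \<in> \<Lambda> \<and> set \<eta>s \<subseteq> U}
           \<union> {GX (trunc \<eta>s m n) | \<eta>s m n. \<eta>s \<in> \<Lambda> \<and> set \<eta>s \<subseteq> U \<and> m \<le> k}))"

definition GUu :: "nat \<Rightarrow> (nat \<Rightarrow> 's) list set \<Rightarrow> ((nat \<Rightarrow> 's) list \<Rightarrow> nat \<Rightarrow> int) \<Rightarrow> (nat \<Rightarrow> 's) set \<Rightarrow> (nat \<Rightarrow> 's) set \<Rightarrow> ('s gen \<Rightarrow>\<^sub>0 int) set set" where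
  "GUu k \<Lambda> a U u = generate (Gx k \<Lambda> a) (\<Union>\<eta>\<in>u. GU k \<Lambda> a (U \<union> (u - {\<eta>})))"

definition pure_subgroup :: "'a set \<Rightarrow> 'a set \<Rightarrow> ('a, 'b) monoid_scheme \<Rightarrow> bool" where
  "pure_subgroup H K G \<longleftrightarrow> subgroup H G \<and> subgroup K G \<and> H \<subseteq> K \<and>
     (\<forall>x\<in>K. \<forall>n::int. n \<noteq> 0 \<longrightarrow> x [^]\<^bsub>G\<^esub> n \<in> H \<longrightarrow> x \<in> H)"

end

theory Submission imports Defs begin

definition pzx :: "'s gen set \<Rightarrow> 's gen \<Rightarrow> 's gen \<Rightarrow> rat" where
  "pzx T g w = (if g \<in> T then 0 else if w = g then 1 else 0)"

primrec yv :: "nat \<Rightarrow> ((nat \<Rightarrow> 's) list \<Rightarrow> nat \<Rightarrow> int) \<Rightarrow> 's gen set \<Rightarrow> (nat \<Rightarrow> 's) list \<Rightarrow> nat \<Rightarrow> 's gen \<Rightarrow> rat" where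
  "yv k a T \<eta> 0 w = (if w = GY \<eta> 0 then 1 else 0)"
| "yv k a T \<eta> (Suc n) w = (yv k a T \<eta> n w + of_int (a \<eta> n) * pzx T GZ w
      + (\<Sum>m\<le>k. pzx T (GX (trunc \<eta> m n)) w)) / of_nat (fact n)"

definition pg :: "nat \<Rightarrow> ((nat \<Rightarrow> 's) list \<Rightarrow> nat \<Rightarrow> int) \<Rightarrow> 's gen set \<Rightarrow> 's gen \<Rightarrow> 's gen \<Rightarrow> rat" where
  "pg k a T g w = (case g of GY \<eta> n \<Rightarrow> if g \<in> T then 0 else yv k a T \<eta> n w | _ \<Rightarrow> pzx T g w)"

definition phi :: "nat \<Rightarrow> ((nat \<Rightarrow> 's) list \<Rightarrow> nat \<Rightarrow> int) \<Rightarrow> 's gen set \<Rightarrow> ('s gen \<Rightarrow>\<^sub>0 int) \<Rightarrow> 's gen \<Rightarrow> rat" where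
  "phi k a T f w = (\<Sum>g\<in>Poly_Mapping.keys f. of_int (poly_mapping.lookup f g) * pg k a T g w)"

lemma phi_eq:
  assumes "finite A" "Poly_Mapping.keys f \<subseteq> A"
  shows "phi k a T f w = (\<Sum>g\<in>A. of_int (poly_mapping.lookup f g) * pg k a T g w)"
  unfolding phi_def
  by (rule sum.mono_neutral_left) (use assms in \<open>auto simp: in_keys_iff\<close>)

lemma phi_add: "phi k a T (f + h) w = phi k a T f w + phi k a T h w"
proof -
  let ?A = "Poly_Mapping.keys f \<union> Poly_Mapping.keys h"
  have "phi k a T (f + h) w = (\<Sum>g\<in>?A. of_int (poly_mapping.lookup (f+h) g) * pg k a T g w)"
    by (rule phi_eq) (auto simp: keys_add)
  also have "\<dots> = (\<Sum>g\<in>?A. of_int (poly_mapping.lookup f g) * pg k a T g w)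
     + (\<Sum>g\<in>?A. of_int (poly_mapping.lookup h g) * pg k a T g w)"
    by (simp add: lookup_add distrib_right sum.distrib)
  also have "\<dots> = phi k a T f w + phi k a T h w"
    by (simp add: phi_eq[symmetric])
  finally show ?thesis .
qed

lemma phi_cmul: "phi k a T (frag_cmul c f) w = of_int c * phi k a T f w"
proof -
  have "phi k a T (frag_cmul c f) w = (\<Sum>g\<in>Poly_Mapping.keys f. of_int (poly_mapping.lookup (frag_cmul c f) g) * pg k a T g w)"
    by (rule phi_eq) (auto simp: keys_cmul)
  then show ?thesis by (simp add: phi_def sum_distrib_left mult.assoc)
qed

lemma phi_uminus: "phi k a T (- f) w = - phi k a T f w"
  using phi_cmul[of k a T "-1" f w] by simp

lemma phi_diff: "phi k a T (f - h) w = phi k a T f w - phi k a T h w"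
  using phi_add[of k a T f "-h" w] phi_uminus[of k a T h w] by simp

lemma phi_zero [simp]: "phi k a T 0 w = 0"
  by (simp add: phi_def)

lemma phi_frag_of [simp]: "phi k a T (frag_of g) w = pg k a T g w"
  by (simp add: phi_def keys_frag_of)

lemma phi_sum: "phi k a T (\<Sum>i\<in>I. F i) w = (\<Sum>i\<in>I. phi k a T (F i) w)"
  by (induction I rule: infinite_finite_induct) (auto simp: phi_add)

lemma pzx_GY [simp]: "pzx T GZ (GY \<eta> n) = 0" "pzx T (GX \<nu>) (GY \<eta> n) = 0"
  by (auto simp: pzx_def)

lemma yv_GY0:
  "yv k a T \<eta> N (GY \<eta>' 0) = (if \<eta> = \<eta>' then 1 / of_nat (\<Prod>n<N. fact n) else 0)"
  by (induction N) simp_all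

lemma pg_simps [simp]:
  "pg k a T GZ w = pzx T GZ w"
  "pg k a T (GX \<nu>) w = pzx T (GX \<nu>) w"
  "pg k a T (GY \<eta> n) w = (if GY \<eta> n \<in> T then 0 else yv k a T \<eta> n w)"
  by (simp_all add: pg_def)

lemma pzx_T [simp]: "g \<in> T \<Longrightarrow> pzx T g w = 0"
  by (simp add: pzx_def)

lemma FA_carrier [simp]: "x \<in> carrier (FA k \<Lambda>) \<longleftrightarrow> Poly_Mapping.keys x \<subseteq> gens k \<Lambda>"
  by (simp add: FA_def)

lemma FA_group [simp]: "group (FA k \<Lambda>)"
  by (simp add: FA_def)

lemma FA_comm_group: "comm_group (FA k \<Lambda>)"
  by (simp add: FA_def abelian_free_Abelian_group)

lemma FA_mult [simp]: "x \<otimes>\<^bsub>FA k \<Lambda>\<^esub> y = x + y"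
  by (simp add: FA_def)

lemma FA_one [simp]: "\<one>\<^bsub>FA k \<Lambda>\<^esub> = 0"
  by (simp add: FA_def)

lemma FA_inv [simp]: "Poly_Mapping.keys x \<subseteq> gens k \<Lambda> \<Longrightarrow> inv\<^bsub>FA k \<Lambda>\<^esub> x = - x"
  by (simp add: FA_def)

lemma FA_int_pow [simp]: "Poly_Mapping.keys x \<subseteq> gens k \<Lambda> \<Longrightarrow> x [^]\<^bsub>FA k \<Lambda>\<^esub> (n::int) = frag_cmul n x"
  by (simp add: FA_def)

lemma gens_GZ [simp]: "GZ \<in> gens k \<Lambda>"
  by (simp add: gens_def)

lemma gens_GY [simp]: "\<eta> \<in> \<Lambda> \<Longrightarrow> GY \<eta> n \<in> gens k \<Lambda>"
  by (simp add: gens_def)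

lemma gens_GX [simp]: "\<eta> \<in> \<Lambda> \<Longrightarrow> m \<le> k \<Longrightarrow> GX (trunc \<eta> m n) \<in> gens k \<Lambda>"
  by (auto simp: gens_def Lam_le_def)

lemma keys_sub_diff:
  fixes x y :: "'g \<Rightarrow>\<^sub>0 int" and F :: "'i \<Rightarrow> 'g \<Rightarrow>\<^sub>0 int"
  shows "Poly_Mapping.keys x \<subseteq> A \<Longrightarrow> Poly_Mapping.keys y \<subseteq> A \<Longrightarrow> Poly_Mapping.keys (x - y) \<subseteq> A"
  using keys_diff[of x y] by blast

lemma keys_sub_add:
  fixes x y :: "'g \<Rightarrow>\<^sub>0 int" and F :: "'i \<Rightarrow> 'g \<Rightarrow>\<^sub>0 int"
  shows "Poly_Mapping.keys x \<subseteq> A \<Longrightarrow> Poly_Mapping.keys y \<subseteq> A \<Longrightarrow> Poly_Mapping.keys (x + y) \<subseteq> A"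
  using keys_add[of x y] by blast

lemma keys_sub_cmul:
  fixes x y :: "'g \<Rightarrow>\<^sub>0 int" and F :: "'i \<Rightarrow> 'g \<Rightarrow>\<^sub>0 int"
  shows "Poly_Mapping.keys x \<subseteq> A \<Longrightarrow> Poly_Mapping.keys (frag_cmul c x) \<subseteq> A"
  using keys_cmul[of c x] by blast

lemma keys_sub_sum:
  fixes x y :: "'g \<Rightarrow>\<^sub>0 int" and F :: "'i \<Rightarrow> 'g \<Rightarrow>\<^sub>0 int"
  assumes "\<And>i. i \<in> I \<Longrightarrow> Poly_Mapping.keys (F i) \<subseteq> A" shows "Poly_Mapping.keys (\<Sum>i\<in>I. F i) \<subseteq> A"
using assms proof (induction I rule: infinite_finite_induct)
  case (insert x I)
  then show ?case by (simp add: keys_sub_add)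
qed auto

lemma relator_keys: "\<eta> \<in> \<Lambda> \<Longrightarrow> Poly_Mapping.keys (relator k a \<eta> n) \<subseteq> gens k \<Lambda>"
  unfolding relator_def
  by (intro keys_sub_diff keys_sub_cmul keys_sub_sum) (auto simp: keys_frag_of)

lemma rels_sub: "rels k \<Lambda> a \<subseteq> carrier (FA k \<Lambda>)"
  unfolding rels_def using relator_keys by fastforce

locale tset =
  fixes k :: nat and \<Lambda> :: "(nat \<Rightarrow> 's) list set" and a :: "(nat \<Rightarrow> 's) list \<Rightarrow> nat \<Rightarrow> int" and T :: "'s gen set"
  assumes Tsub: "T \<subseteq> gens k \<Lambda>"
  and c1: "\<And>\<eta> n n'. GY \<eta> n \<in> T \<Longrightarrow> GY \<eta> n' \<in> T"
  and c2: "\<And>\<eta> n. \<eta> \<in> \<Lambda> \<Longrightarrow> GY \<eta> n \<in> T \<Longrightarrow> GZ \<in> T"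
  and c3: "\<And>\<eta> n m. \<eta> \<in> \<Lambda> \<Longrightarrow> GY \<eta> n \<in> T \<Longrightarrow> m \<le> k \<Longrightarrow> GX (trunc \<eta> m n) \<in> T"
begin

abbreviation "F \<equiv> FA k \<Lambda>"
abbreviation "M \<equiv> generate F (rels k \<Lambda> a \<union> frag_of ` T)"

lemma gen_sub: "rels k \<Lambda> a \<union> frag_of ` T \<subseteq> carrier F"
  using rels_sub Tsub by (auto simp: keys_frag_of)

lemma M_subgroup: "subgroup M F"
  by (rule group.generate_is_subgroup[OF FA_group gen_sub])

lemma M_keys: "x \<in> M \<Longrightarrow> Poly_Mapping.keys x \<subseteq> gens k \<Lambda>"
  using subgroup.mem_carrier[OF M_subgroup] by simp

lemma M_add: "x \<in> M \<Longrightarrow> y \<in> M \<Longrightarrow> x + y \<in> M"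
  using subgroup.m_closed[OF M_subgroup] by fastforce

lemma M_uminus: "x \<in> M \<Longrightarrow> - x \<in> M"
  using subgroup.m_inv_closed[OF M_subgroup] M_keys by fastforce

lemma M_diff: "x \<in> M \<Longrightarrow> y \<in> M \<Longrightarrow> x - y \<in> M"
  using M_add[OF _ M_uminus] by (metis diff_conv_add_uminus)

lemma M_cmul: "x \<in> M \<Longrightarrow> frag_cmul c x \<in> M"
  using group.subgroup_int_pow_closed[OF FA_group M_subgroup, of x c] M_keys by simp

lemma M_zero: "0 \<in> M"
  using generate.one[of F] by simp

lemma M_rel: "\<eta> \<in> \<Lambda> \<Longrightarrow> relator k a \<eta> n \<in> M"
  by (rule generate.incl) (auto simp: rels_def)

lemma M_T: "g \<in> T \<Longrightarrow> frag_of g \<in> M"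
  by (rule generate.incl) auto

lemma pg_T: "g \<in> T \<Longrightarrow> pg k a T g w = 0"
  by (cases g) auto

lemma phi_relator: assumes "\<eta> \<in> \<Lambda>" shows "phi k a T (relator k a \<eta> n) w = 0"
proof (cases "GY \<eta> n \<in> T")
  case True
  then show ?thesis
    using c1[OF True, of "Suc n"] c2[OF assms True] c3[OF assms True]
    by (simp add: relator_def phi_diff phi_cmul phi_sum)
next
  case False
  then have "GY \<eta> (Suc n) \<notin> T" using c1 by blast
  moreover have "of_int (int (fact n)) * yv k a T \<eta> (Suc n) w = yv k a T \<eta> n w + of_int (a \<eta> n) * pzx T GZ w
      + (\<Sum>m\<le>k. pzx T (GX (trunc \<eta> m n)) w)"
    by simp
  ultimately show ?thesis using False
    by (simp add: relator_def phi_diff phi_cmul phi_sum)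
qed

lemma phi_M: "x \<in> M \<Longrightarrow> phi k a T x w = 0"
proof (induction x rule: generate.induct)
  case one
  then show ?case by simp
next
  case (incl h)
  then show ?case by (auto simp: rels_def phi_relator pg_T)
next
  case (inv h)
  then have "h \<in> carrier F" using gen_sub by blast
  then have "Poly_Mapping.keys h \<subseteq> gens k \<Lambda>" by simp
  then show ?case using inv by (auto simp: rels_def phi_relator pg_T phi_uminus)
next
  case (eng h1 h2)
  then show ?case by (simp add: phi_add)
qed

definition NF :: "nat \<Rightarrow> 's gen set" where
  "NF N = {g \<in> gens k \<Lambda>. g \<notin> T \<and> (\<forall>\<eta> n. g = GY \<eta> n \<longrightarrow> n = N)}"

definition good :: "nat \<Rightarrow> ('s gen \<Rightarrow>\<^sub>0 int) \<Rightarrow> bool" where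
  "good N f \<longleftrightarrow> (\<exists>h. Poly_Mapping.keys h \<subseteq> NF N \<and> f - h \<in> M)"

lemma good_M: "f \<in> M \<Longrightarrow> good N f"
  unfolding good_def by (rule exI[of _ 0]) simp

lemma good_diff: assumes "good N f" "good N g" shows "good N (f - g)"
proof -
  obtain h1 h2 where h: "Poly_Mapping.keys h1 \<subseteq> NF N" "f - h1 \<in> M" "Poly_Mapping.keys h2 \<subseteq> NF N" "g - h2 \<in> M"
    using assms unfolding good_def by blast
  have eq: "(f - g) - (h1 - h2) = (f - h1) - (g - h2)" by (simp add: algebra_simps)
  have "(f - g) - (h1 - h2) \<in> M" by (subst eq) (rule M_diff[OF h(2) h(4)])
  moreover have "Poly_Mapping.keys (h1 - h2) \<subseteq> NF N" using h keys_sub_diff by blast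
  ultimately show ?thesis unfolding good_def by blast
qed

lemma good_add: assumes "good N f" "good N g" shows "good N (f + g)"
proof -
  obtain h1 h2 where h: "Poly_Mapping.keys h1 \<subseteq> NF N" "f - h1 \<in> M" "Poly_Mapping.keys h2 \<subseteq> NF N" "g - h2 \<in> M"
    using assms unfolding good_def by blast
  have eq: "(f + g) - (h1 + h2) = (f - h1) + (g - h2)" by (simp add: algebra_simps)
  have "(f + g) - (h1 + h2) \<in> M" by (subst eq) (rule M_add[OF h(2) h(4)])
  moreover have "Poly_Mapping.keys (h1 + h2) \<subseteq> NF N" using h keys_sub_add by blast
  ultimately show ?thesis unfolding good_def by blast
qed

lemma frag_cmul_minus2: "frag_cmul c (f - h) = frag_cmul c f - frag_cmul c h"
  by (rule poly_mapping_eqI) (simp add: lookup_minus algebra_simps)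

lemma good_cmul: assumes "good N f" shows "good N (frag_cmul c f)"
proof -
  obtain h where h: "Poly_Mapping.keys h \<subseteq> NF N" "f - h \<in> M"
    using assms unfolding good_def by blast
  have "frag_cmul c f - frag_cmul c h \<in> M" using M_cmul[OF h(2), of c] by (simp add: frag_cmul_minus2)
  moreover have "Poly_Mapping.keys (frag_cmul c h) \<subseteq> NF N" using h keys_sub_cmul by blast
  ultimately show ?thesis unfolding good_def by blast
qed

lemma good_sum: "(\<And>i. i \<in> I \<Longrightarrow> good N (G i)) \<Longrightarrow> good N (\<Sum>i\<in>I. G i)"
proof (induction I rule: infinite_finite_induct)
  case (infinite A)
  then show ?case using good_M M_zero by simp
next
  case empty
  then show ?case using good_M M_zero by simp
next
  case (insert x A)
  then show ?case by (simp add: good_add)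
qed

lemma good_self: "g \<in> gens k \<Lambda> \<Longrightarrow> (\<forall>\<eta> n. g = GY \<eta> n \<longrightarrow> n = N) \<Longrightarrow> good N (frag_of g)"
proof (cases "g \<in> T")
  case True
  then show ?thesis using good_M M_T by blast
next
  case False
  assume "g \<in> gens k \<Lambda>" "\<forall>\<eta> n. g = GY \<eta> n \<longrightarrow> n = N"
  then have "Poly_Mapping.keys (frag_of g) \<subseteq> NF N" using False by (simp add: NF_def keys_frag_of)
  then show ?thesis unfolding good_def by (intro exI[of _ "frag_of g"]) (simp add: M_zero)
qed

lemma good_y_aux: "\<eta> \<in> \<Lambda> \<Longrightarrow> n + d = N \<Longrightarrow> good N (frag_of (GY \<eta> n))"
proof (induction d arbitrary: n)
  case 0
  then show ?case by (intro good_self) auto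
next
  case (Suc d)
  have IH: "good N (frag_of (GY \<eta> (Suc n)))" using Suc by simp
  have eq: "frag_of (GY \<eta> n) = frag_cmul (int (fact n)) (frag_of (GY \<eta> (Suc n)))
      - frag_cmul (a \<eta> n) (frag_of GZ) - (\<Sum>m\<le>k. frag_of (GX (trunc \<eta> m n))) - relator k a \<eta> n"
    by (simp add: relator_def)
  have "good N (frag_of GZ)" by (intro good_self) auto
  moreover have "good N (\<Sum>m\<le>k. frag_of (GX (trunc \<eta> m n)))"
    using Suc.prems by (intro good_sum good_self) auto
  moreover have "good N (relator k a \<eta> n)" using M_rel Suc.prems good_M by blast
  ultimately show ?case using IH
    by (subst eq) (intro good_diff good_cmul; simp)
qed

lemma good_y: "\<eta> \<in> \<Lambda> \<Longrightarrow> n \<le> N \<Longrightarrow> good N (frag_of (GY \<eta> n))"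
  using good_y_aux[of \<eta> n "N - n" N] by simp

lemma gens_GY_iff: "GY \<eta> n \<in> gens k \<Lambda> \<longleftrightarrow> \<eta> \<in> \<Lambda>"
  by (auto simp: gens_def)

lemma good_all: assumes "Poly_Mapping.keys f \<subseteq> gens k \<Lambda>" shows "\<exists>N0. \<forall>N\<ge>N0. good N f"
proof (rule free_Abelian_group_induct[where P="\<lambda>f. \<exists>N0. \<forall>N\<ge>N0. good N f", OF assms])
  show "\<exists>N0. \<forall>N\<ge>N0. good N 0" using good_M M_zero by blast
next
  fix x y :: "'s gen \<Rightarrow>\<^sub>0 int"
  assume "\<exists>N0. \<forall>N\<ge>N0. good N x" "\<exists>N0. \<forall>N\<ge>N0. good N y"
  then obtain N1 N2 where "\<forall>N\<ge>N1. good N x" "\<forall>N\<ge>N2. good N y" by blast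
  then have "\<forall>N\<ge>max N1 N2. good N (x - y)" by (simp add: good_diff)
  then show "\<exists>N0. \<forall>N\<ge>N0. good N (x - y)" by blast
next
  fix g assume g: "g \<in> gens k \<Lambda>"
  show "\<exists>N0. \<forall>N\<ge>N0. good N (frag_of g)"
  proof (cases g)
    case GZ
    then show ?thesis using g by (intro exI[of _ 0] allI impI good_self) auto
  next
    case (GX x2)
    then show ?thesis using g by (intro exI[of _ 0] allI impI good_self) auto
  next
    case (GY \<eta> n)
    then have "\<eta> \<in> \<Lambda>" using g gens_GY_iff by blast
    then have "\<forall>N\<ge>n. good N (frag_of g)" using GY good_y by blast
    then show ?thesis by blast
  qed
qed

lemma pg_NF_GY0:
  assumes "g \<in> NF N"
  shows "pg k a T g (GY \<eta> 0) = (if g = GY \<eta> N then 1 / of_nat (\<Prod>n<N. fact n) else 0)"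
proof (cases g)
  case (GY \<eta>' n')
  then have "n' = N" "g \<notin> T" using assms by (auto simp: NF_def)
  then show ?thesis using GY by (simp add: yv_GY0)
qed auto

lemma pg_NF_other:
  assumes "g \<in> NF N" "\<forall>\<eta> n. g \<noteq> GY \<eta> n"
  shows "pg k a T g w = (if w = g then 1 else 0)"
  using assms by (cases g) (auto simp: NF_def pzx_def)

lemma sum_single_nz:
  assumes "finite A" "x \<in> A" "\<And>y. y \<in> A \<Longrightarrow> y \<noteq> x \<Longrightarrow> f y = 0"
  shows "sum f A = (f x :: rat)"
proof -
  have "sum f A = f x + sum f (A - {x})" using assms by (simp add: sum.remove)
  also have "sum f (A - {x}) = 0" using assms by (intro sum.neutral) auto
  finally show ?thesis by simp
qed

lemma NF_inj:
  assumes h: "Poly_Mapping.keys h \<subseteq> NF N" and z: "\<And>w. phi k a T h w = 0"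
  shows "h = 0"
proof -
  have y0: "poly_mapping.lookup h (GY \<eta> N) = 0" for \<eta>
  proof (rule ccontr)
    assume nz: "poly_mapping.lookup h (GY \<eta> N) \<noteq> 0"
    then have mem: "GY \<eta> N \<in> Poly_Mapping.keys h" by (simp add: in_keys_iff)
    have "phi k a T h (GY \<eta> 0) = (\<Sum>g\<in>Poly_Mapping.keys h. if g = GY \<eta> N then of_int (poly_mapping.lookup h g) * (1 / of_nat (\<Prod>n<N. fact n)) else 0)"
      unfolding phi_def
    proof (rule sum.cong[OF refl])
      fix g assume "g \<in> Poly_Mapping.keys h"
      then have "g \<in> NF N" using h by blast
      show "of_int (poly_mapping.lookup h g) * pg k a T g (GY \<eta> 0) = (if g = GY \<eta> N then of_int (poly_mapping.lookup h g) * (1 / of_nat (\<Prod>n<N. fact n)) else 0)"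
        by (simp only: pg_NF_GY0[OF \<open>g \<in> NF N\<close>]) simp
    qed
    also have "\<dots> = of_int (poly_mapping.lookup h (GY \<eta> N)) * (1 / of_nat (\<Prod>n<N. fact n))"
      using mem by simp
    finally have "phi k a T h (GY \<eta> 0) = of_int (poly_mapping.lookup h (GY \<eta> N)) * (1 / of_nat (\<Prod>n<N. fact n))" .
    moreover have "of_nat (\<Prod>n<N. fact n) \<noteq> (0::rat)"
      by (simp add: prod_zero_iff)
    ultimately have "phi k a T h (GY \<eta> 0) \<noteq> 0" using nz by simp
    then show False using z by simp
  qed
  have "Poly_Mapping.keys h = {}"
  proof (rule ccontr)
    assume "Poly_Mapping.keys h \<noteq> {}"
    then obtain g where g: "g \<in> Poly_Mapping.keys h" by blast
    have noty: "\<forall>\<eta> n. g' \<noteq> GY \<eta> n" if "g' \<in> Poly_Mapping.keys h" for g'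
    proof (intro allI notI)
      fix \<eta> n assume "g' = GY \<eta> n"
      then have "n = N" using that h by (auto simp: NF_def)
      then show False using that y0 \<open>g' = GY \<eta> n\<close> by (simp add: in_keys_iff)
    qed
    have "phi k a T h g = of_int (poly_mapping.lookup h g)"
      unfolding phi_def
      by (rule trans[OF sum_single_nz[OF finite_keys g]]) (use h pg_NF_other noty g in auto)
    then have "poly_mapping.lookup h g = 0" using z by simp
    then show False using g by (simp add: in_keys_iff)
  qed
  then show ?thesis by simp
qed

lemma key_pure:
  assumes f: "Poly_Mapping.keys f \<subseteq> gens k \<Lambda>" and q: "q \<noteq> 0" and m: "frag_cmul q f \<in> M"
  shows "f \<in> M"
proof -
  obtain N where "good N f" using good_all[OF f] by blast
  then obtain h where h: "Poly_Mapping.keys h \<subseteq> NF N" "f - h \<in> M" unfolding good_def by blast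
  have "frag_cmul q h = frag_cmul q f - frag_cmul q (f - h)" by (simp add: frag_cmul_minus2)
  then have "frag_cmul q h \<in> M" using m M_cmul[OF h(2)] M_diff by simp
  then have "of_int q * phi k a T h w = 0" for w using phi_M phi_cmul by metis
  then have "phi k a T h w = 0" for w using q by simp
  then have "h = 0" using NF_inj[OF h(1)] by blast
  then show ?thesis using h by simp
qed

abbreviation "R \<equiv> relsub k \<Lambda> a"
abbreviation "GG \<equiv> Gx k \<Lambda> a"
abbreviation "pr \<equiv> (\<lambda>x. R #>\<^bsub>F\<^esub> x)"
abbreviation "H \<equiv> generate GG (cls k \<Lambda> a ` T)"

lemma R_subgroup: "subgroup R F"
  unfolding relsub_def by (rule group.generate_is_subgroup[OF FA_group rels_sub])

lemma R_normal: "R \<lhd> F"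
  using comm_group.subgroup_imp_normal[OF FA_comm_group R_subgroup] .

lemma GG_group: "group GG"
  unfolding Gx_def using normal.factorgroup_is_group[OF R_normal] .

lemma pr_hom: "group_hom F GG pr"
  unfolding Gx_def
  using normal.r_coset_hom_Mod[OF R_normal] normal.factorgroup_is_group[OF R_normal]
  by (simp add: group_hom_def group_hom_axioms_def)

lemma R_sub_M: "R \<subseteq> M"
  unfolding relsub_def by (rule group.mono_generate[OF FA_group]) blast

lemma cls_eq: "cls k \<Lambda> a g = pr (frag_of g)"
  by (simp add: cls_def)

lemma Tfrag_sub: "frag_of ` T \<subseteq> carrier F"
  using Tsub by (auto simp: keys_frag_of)

lemma H_img: "H = pr ` generate F (frag_of ` T)"
proof -
  have "cls k \<Lambda> a ` T = pr ` (frag_of ` T)" by (auto simp: cls_eq)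
  then show ?thesis using group_hom.generate_img[OF pr_hom Tfrag_sub] by simp
qed

lemma H_subgroup: "subgroup H GG"
proof -
  have "cls k \<Lambda> a ` T \<subseteq> carrier GG"
    using Tfrag_sub group_hom.hom_closed[OF pr_hom] by (auto simp: cls_eq)
  then show ?thesis by (rule group.generate_is_subgroup[OF GG_group])
qed

lemma pr_R: "r \<in> R \<Longrightarrow> pr r = \<one>\<^bsub>GG\<^esub>"
proof -
  assume r: "r \<in> R"
  have "pr r = R" using subgroup.rcos_const[OF R_subgroup FA_group r] .
  also have "\<dots> = pr \<one>\<^bsub>F\<^esub>" using subgroup.rcos_const[OF R_subgroup FA_group subgroup.one_closed[OF R_subgroup]] by simp
  also have "\<dots> = \<one>\<^bsub>GG\<^esub>" using group_hom.hom_one[OF pr_hom] .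
  finally show ?thesis .
qed

lemma pr_gen: "h \<in> rels k \<Lambda> a \<union> frag_of ` T \<Longrightarrow> pr h \<in> H"
proof -
  assume h: "h \<in> rels k \<Lambda> a \<union> frag_of ` T"
  show "pr h \<in> H"
  proof (cases "h \<in> rels k \<Lambda> a")
    case True
    then have "h \<in> R" unfolding relsub_def by (rule generate.incl)
    then show ?thesis using pr_R subgroup.one_closed[OF H_subgroup] by simp
  next
    case False
    then obtain g where "g \<in> T" "h = frag_of g" using h by blast
    then show ?thesis by (auto intro: generate.incl simp: cls_eq)
  qed
qed

lemma pr_M: "y \<in> M \<Longrightarrow> pr y \<in> H"
proof (induction y rule: generate.induct)
  case one
  then show ?case using group_hom.hom_one[OF pr_hom] subgroup.one_closed[OF H_subgroup] by simp
next
  case (incl h)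
  then show ?case by (rule pr_gen)
next
  case (inv h)
  then have "h \<in> carrier F" using gen_sub by blast
  then have "pr (inv\<^bsub>F\<^esub> h) = inv\<^bsub>GG\<^esub> (pr h)" using group_hom.hom_inv[OF pr_hom] by blast
  then show ?case using subgroup.m_inv_closed[OF H_subgroup pr_gen[OF inv]] by simp
next
  case (eng h1 h2)
  have "h1 \<in> carrier F" "h2 \<in> carrier F"
    using eng(1,2) subgroup.mem_carrier[OF M_subgroup] by blast+
  then have "pr (h1 \<otimes>\<^bsub>F\<^esub> h2) = pr h1 \<otimes>\<^bsub>GG\<^esub> pr h2" using group_hom.hom_mult[OF pr_hom] by blast
  then show ?case using subgroup.m_closed[OF H_subgroup eng(3,4)] by simp
qed

lemma pure_H:
  assumes x: "x \<in> carrier GG" and n: "n \<noteq> (0::int)" and p: "x [^]\<^bsub>GG\<^esub> n \<in> H"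
  shows "x \<in> H"
proof -
  obtain f where f: "f \<in> carrier F" "x = pr f"
    using x unfolding Gx_def carrier_FactGroup by blast
  have fk: "Poly_Mapping.keys f \<subseteq> gens k \<Lambda>" using f by simp
  have "x [^]\<^bsub>GG\<^esub> n = pr (f [^]\<^bsub>F\<^esub> n)"
    using group_hom.hom_int_pow[OF pr_hom f(1)] f(2) by simp
  also have "f [^]\<^bsub>F\<^esub> n = frag_cmul n f" using fk by simp
  finally have "pr (frag_cmul n f) \<in> H" using p by simp
  then obtain t where t: "t \<in> generate F (frag_of ` T)" "pr (frag_cmul n f) = pr t"
    unfolding H_img by blast
  have tc: "t \<in> carrier F" using t(1) group.generate_incl[OF FA_group Tfrag_sub] by blast
  have tM: "t \<in> M" using t(1) group.mono_generate[OF FA_group, of "frag_of ` T" "rels k \<Lambda> a \<union> frag_of ` T"] by blast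
  have nfc: "frag_cmul n f \<in> carrier F" using fk keys_sub_cmul by simp
  have "frag_cmul n f \<in> pr t"
    using group.rcos_self[OF FA_group nfc R_subgroup] t(2) by simp
  then have "frag_cmul n f \<otimes>\<^bsub>F\<^esub> inv\<^bsub>F\<^esub> t \<in> R"
    using subgroup.rcos_module_imp[OF R_subgroup FA_group tc] by blast
  then have "frag_cmul n f - t \<in> M" using R_sub_M tc by auto
  then have "(frag_cmul n f - t) + t \<in> M" using M_add tM by blast
  then have "frag_cmul n f \<in> M" by simp
  then have "f \<in> M" using key_pure[OF fk n] by blast
  then show ?thesis using pr_M f(2) by simp
qed

end

lemma (in tset) cls_sub: "cls k \<Lambda> a ` T \<subseteq> carrier GG"
  using subgroup.subset[OF H_subgroup] generate.incl[of _ "cls k \<Lambda> a ` T" GG] by blast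

definition TU :: "nat \<Rightarrow> (nat \<Rightarrow> 's) list set \<Rightarrow> (nat \<Rightarrow> 's) set \<Rightarrow> 's gen set" where
  "TU k \<Lambda> U = {GZ} \<union> {GY \<eta>s n | \<eta>s n. \<eta>s \<in> \<Lambda> \<and> set \<eta>s \<subseteq> U}
           \<union> {GX (trunc \<eta>s m n) | \<eta>s m n. \<eta>s \<in> \<Lambda> \<and> set \<eta>s \<subseteq> U \<and> m \<le> k}"

lemma GU_eq: "GU k \<Lambda> a U = generate (Gx k \<Lambda> a) (cls k \<Lambda> a ` TU k \<Lambda> U)"
  by (simp add: GU_def TU_def)

lemma TU_mono: "U \<subseteq> V \<Longrightarrow> TU k \<Lambda> U \<subseteq> TU k \<Lambda> V"
  unfolding TU_def by blast

lemma tset_TU: "tset k \<Lambda> (TU k \<Lambda> U)"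
proof
  show "TU k \<Lambda> U \<subseteq> gens k \<Lambda>" unfolding TU_def by auto
next
  fix \<eta> n n' assume "GY \<eta> n \<in> TU k \<Lambda> U" then show "GY \<eta> n' \<in> TU k \<Lambda> U"
    unfolding TU_def by auto
next
  fix \<eta> n show "GZ \<in> TU k \<Lambda> U" unfolding TU_def by auto
next
  fix \<eta> n m assume "GY \<eta> n \<in> TU k \<Lambda> U" "m \<le> k" then show "GX (trunc \<eta> m n) \<in> TU k \<Lambda> U"
    unfolding TU_def by auto
qed

lemma tset_UN:
  assumes A: "\<And>i. i \<in> I \<Longrightarrow> tset k \<Lambda> (A i)"
  shows "tset k \<Lambda> (\<Union>i\<in>I. A i)"
proof
  show "(\<Union>i\<in>I. A i) \<subseteq> gens k \<Lambda>"
  proof (rule UN_least)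
    fix i assume "i \<in> I" then show "A i \<subseteq> gens k \<Lambda>" using tset.Tsub[OF A] by blast
  qed
next
  fix \<eta> n n' assume "GY \<eta> n \<in> (\<Union>i\<in>I. A i)"
  then obtain i where i: "i \<in> I" "GY \<eta> n \<in> A i" by blast
  have "GY \<eta> n' \<in> A i" by (rule tset.c1[OF A[OF i(1)] i(2)])
  then show "GY \<eta> n' \<in> (\<Union>i\<in>I. A i)" using i(1) by blast
next
  fix \<eta> n assume e: "\<eta> \<in> \<Lambda>" and "GY \<eta> n \<in> (\<Union>i\<in>I. A i)"
  then obtain i where i: "i \<in> I" "GY \<eta> n \<in> A i" by blast
  have "GZ \<in> A i" by (rule tset.c2[OF A[OF i(1)] e i(2)])
  then show "GZ \<in> (\<Union>i\<in>I. A i)" using i(1) by blast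
next
  fix \<eta> n m assume e: "\<eta> \<in> \<Lambda>" and "GY \<eta> n \<in> (\<Union>i\<in>I. A i)" and m: "m \<le> k"
  then obtain i where i: "i \<in> I" "GY \<eta> n \<in> A i" by blast
  have "GX (trunc \<eta> m n) \<in> A i" by (rule tset.c3[OF A[OF i(1)] e i(2) m])
  then show "GX (trunc \<eta> m n) \<in> (\<Union>i\<in>I. A i)" using i(1) by blast
qed

lemma generate_UN:
  assumes G: "group G" and A: "\<And>i. i \<in> I \<Longrightarrow> A i \<subseteq> carrier G"
  shows "generate G (\<Union>i\<in>I. generate G (A i)) = generate G (\<Union>i\<in>I. A i)"
proof
  have sub: "(\<Union>i\<in>I. A i) \<subseteq> carrier G" using A by blast
  have "(\<Union>i\<in>I. generate G (A i)) \<subseteq> generate G (\<Union>i\<in>I. A i)"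
  proof (rule UN_least)
    fix i assume "i \<in> I"
    then have "A i \<subseteq> (\<Union>i\<in>I. A i)" by blast
    then show "generate G (A i) \<subseteq> generate G (\<Union>i\<in>I. A i)" by (rule group.mono_generate[OF G])
  qed
  then show "generate G (\<Union>i\<in>I. generate G (A i)) \<subseteq> generate G (\<Union>i\<in>I. A i)"
    by (rule group.generate_subgroup_incl[OF G _ group.generate_is_subgroup[OF G sub]])
next
  have "(\<Union>i\<in>I. A i) \<subseteq> (\<Union>i\<in>I. generate G (A i))"
  proof (rule UN_mono)
    fix i show "A i \<subseteq> generate G (A i)" by (auto intro: generate.incl)
  qed simp
  then show "generate G (\<Union>i\<in>I. A i) \<subseteq> generate G (\<Union>i\<in>I. generate G (A i))"
    by (rule group.mono_generate[OF G])
qed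

theorem claim1p10:
  fixes k :: nat and S :: "'s set" and \<Lambda> :: "(nat \<Rightarrow> 's) list set"
    and a :: "(nat \<Rightarrow> 's) list \<Rightarrow> nat \<Rightarrow> int"
    and U u :: "(nat \<Rightarrow> 's) set"
  assumes "is_param k S \<Lambda> a"
    and "U \<subseteq> omega_seqs S"
    and "u \<subseteq> omega_seqs S - U" and "finite u"
  shows "GUu k \<Lambda> a U u \<subseteq> GU k \<Lambda> a (U \<union> u)
    \<and> pure_subgroup (GUu k \<Lambda> a U u) (GU k \<Lambda> a (U \<union> u)) (Gx k \<Lambda> a)
    \<and> pure_subgroup (GU k \<Lambda> a (U \<union> u)) (carrier (Gx k \<Lambda> a)) (Gx k \<Lambda> a)"
proof -
  define T1 where "T1 = (\<Union>v\<in>u. TU k \<Lambda> (U \<union> (u - {v})))"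
  define T2 where "T2 = TU k \<Lambda> (U \<union> u)"
  interpret t1: tset k \<Lambda> a T1 unfolding T1_def by (intro tset_UN tset_TU)
  interpret t2: tset k \<Lambda> a T2 unfolding T2_def by (rule tset_TU)
  have G: "group (Gx k \<Lambda> a)" by (rule t1.GG_group)
  have e1: "GUu k \<Lambda> a U u = generate (Gx k \<Lambda> a) (cls k \<Lambda> a ` T1)"
  proof -
    have "GUu k \<Lambda> a U u = generate (Gx k \<Lambda> a) (\<Union>v\<in>u. generate (Gx k \<Lambda> a) (cls k \<Lambda> a ` TU k \<Lambda> (U \<union> (u - {v}))))"
      by (simp add: GUu_def GU_eq)
    also have "\<dots> = generate (Gx k \<Lambda> a) (\<Union>v\<in>u. cls k \<Lambda> a ` TU k \<Lambda> (U \<union> (u - {v})))"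
      by (rule generate_UN[OF G tset.cls_sub[OF tset_TU]])
    also have "\<dots> = generate (Gx k \<Lambda> a) (cls k \<Lambda> a ` T1)"
      by (simp add: T1_def image_UN)
    finally show ?thesis .
  qed
  have e2: "GU k \<Lambda> a (U \<union> u) = generate (Gx k \<Lambda> a) (cls k \<Lambda> a ` T2)"
    by (simp add: GU_eq T2_def)
  have T12: "T1 \<subseteq> T2" unfolding T1_def T2_def by (intro UN_least TU_mono) blast
  have sub: "GUu k \<Lambda> a U u \<subseteq> GU k \<Lambda> a (U \<union> u)"
    unfolding e1 e2 using T12 by (intro group.mono_generate[OF G] image_mono)
  have s1: "subgroup (GUu k \<Lambda> a U u) (Gx k \<Lambda> a)" unfolding e1 by (rule t1.H_subgroup)
  have s2: "subgroup (GU k \<Lambda> a (U \<union> u)) (Gx k \<Lambda> a)" unfolding e2 by (rule t2.H_subgroup)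
  have p1: "pure_subgroup (GUu k \<Lambda> a U u) (GU k \<Lambda> a (U \<union> u)) (Gx k \<Lambda> a)"
    unfolding pure_subgroup_def
  proof (intro conjI s1 s2 sub ballI allI impI)
    fix x n assume "x \<in> GU k \<Lambda> a (U \<union> u)" "n \<noteq> (0::int)" "x [^]\<^bsub>Gx k \<Lambda> a\<^esub> n \<in> GUu k \<Lambda> a U u"
    then show "x \<in> GUu k \<Lambda> a U u"
      using t1.pure_H subgroup.mem_carrier[OF s2] unfolding e1 by blast
  qed
  have p2: "pure_subgroup (GU k \<Lambda> a (U \<union> u)) (carrier (Gx k \<Lambda> a)) (Gx k \<Lambda> a)"
    unfolding pure_subgroup_def
  proof (intro conjI s2 ballI allI impI group.subgroup_self[OF G] subgroup.subset[OF s2])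
    fix x n assume "x \<in> carrier (Gx k \<Lambda> a)" "n \<noteq> (0::int)" "x [^]\<^bsub>Gx k \<Lambda> a\<^esub> n \<in> GU k \<Lambda> a (U \<union> u)"
    then show "x \<in> GU k \<Lambda> a (U \<union> u)"
      using t2.pure_H unfolding e2 by blast
  qed
  show ?thesis using sub p1 p2 by blast
qed

end
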